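(* Let $n\ge 2$ and let $f:\{0,1\}^n\to\{0,1\}$ be written in the form $f(x_1,\dots,x_n)=\bigoplus_{I\subseteq\{1,\dots,n\}} a_I\bigwedge_{i\in I}x_i$ with $a_I\in\{0,1\}$. Let $\mathcal J=\{I\subseteq\{1,\dots,n\}: a_I=1,\ |I|\ge 2\}$ and suppose $n_{\mathcal J}=1$. Then the number $N^{scratch}_{comm}$ of one-way communication channels needed to simulate the full-correlation box associated to $f$ from scratch is $$N^{scratch}_{comm}=\Big|\bigcup_{I\in\mathcal J} I\Big|-1.$$
   Context: The full-correlation box associated to a Boolean function $f$ of $n$ inputs is the $n$-partite box with binary inputs $\vec x=(x_1,\dots,x_n)$ and binary outputs $\vec a=(a_1,\dots,a_n)$ given by $P(\vec a\mid\vec x)=2^{-(n-1)}$ if $\bigoplus_i a_i=f(\vec x)$ and $0$ otherwise. $n_{\mathcal J}$ denotes the maximal number of blocks in a partition $\{J_1,\dots,J_{n_{\mathcal J}}\}$ of $\mathcal J$ such that $A\cap B=\emptyset$ whenever $A\in J_i$, $B\in J_j$, $i\ne j$ (so $n_{\mathcal J}=1$ means the sets in $\mathcal J$ are connected under the relation of having nonempty intersection). Simulating a box from scratch means that the $n$ parties, using only shared randomness, local operations, and a set of one-way classical communication channels (each an ordered pair of parties, usable arbitrarily often), produce outputs with exactly the box's conditional distribution; $N^{scratch}_{comm}$ is the number of such channels required. *)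

theory Defs
  imports "HOL-Probability.Probability_Mass_Function"
begin

text \<open>Parties are indexed 0..n-1. Inputs and outputs are functions nat => bool,
  only the values at indices below n matter.\<close>

definition anf_eval :: "nat \<Rightarrow> (nat set \<Rightarrow> bool) \<Rightarrow> (nat \<Rightarrow> bool) \<Rightarrow> bool" where
  "anf_eval n c x = odd (card {I. I \<subseteq> {0..<n} \<and> c I \<and> (\<forall>i\<in>I. x i)})"

definition monomials_J :: "nat \<Rightarrow> (nat set \<Rightarrow> bool) \<Rightarrow> nat set set" where
  "monomials_J n c = {I. I \<subseteq> {0..<n} \<and> c I \<and> card I \<ge> 2}"

definition disjoint_block_partition :: "'a set set \<Rightarrow> 'a set set set \<Rightarrow> bool" where
  "disjoint_block_partition J P \<longleftrightarrow>
     (\<forall>B\<in>P. B \<noteq> {}) \<and> \<Union>P = J \<and>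
     (\<forall>B1\<in>P. \<forall>B2\<in>P. B1 \<noteq> B2 \<longrightarrow> B1 \<inter> B2 = {}) \<and>
     (\<forall>B1\<in>P. \<forall>B2\<in>P. B1 \<noteq> B2 \<longrightarrow> (\<forall>A\<in>B1. \<forall>A'\<in>B2. A \<inter> A' = {}))"

definition n_J :: "'a set set \<Rightarrow> nat" where
  "n_J J = Max (card ` {P. disjoint_block_partition J P})"

definition fc_box :: "nat \<Rightarrow> ((nat \<Rightarrow> bool) \<Rightarrow> bool) \<Rightarrow> (nat \<Rightarrow> bool) \<Rightarrow> (nat \<Rightarrow> bool) \<Rightarrow> real" where
  "fc_box n f a x = (if odd (card {j. j < n \<and> a j}) = f x then 1 / 2 ^ (n - 1) else 0)"

text \<open>Simulation from scratch with channel set C (pairs (i,j): i may send to j, arbitrarily often).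
  With shared randomness, local operations and arbitrarily many rounds of communication,
  the achievable behaviours are exactly mixtures (by shared randomness) of deterministic
  strategy profiles in which the output of party j depends only on the inputs of parties
  from which j is reachable in the channel graph (including j itself).\<close>
definition simulates_from_scratch ::
  "nat \<Rightarrow> (nat \<times> nat) set \<Rightarrow> ((nat \<Rightarrow> bool) \<Rightarrow> (nat \<Rightarrow> bool) \<Rightarrow> real) \<Rightarrow> bool" where
  "simulates_from_scratch n C P \<longleftrightarrow>
     (\<exists>\<mu> :: (nat \<Rightarrow> (nat \<Rightarrow> bool) \<Rightarrow> bool) pmf.
        (\<forall>g\<in>set_pmf \<mu>. \<forall>j<n. \<forall>x y. (\<forall>k. (k, j) \<in> C\<^sup>* \<longrightarrow> x k = y k) \<longrightarrow> g j x = g j y) \<and>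
        (\<forall>a x. measure_pmf.prob \<mu> {g. \<forall>j<n. g j x = a j} = P a x))"

definition channels :: "nat \<Rightarrow> (nat \<times> nat) set" where
  "channels n = {(i, j). i < n \<and> j < n \<and> i \<noteq> j}"

definition N_scratch_comm :: "nat \<Rightarrow> ((nat \<Rightarrow> bool) \<Rightarrow> (nat \<Rightarrow> bool) \<Rightarrow> real) \<Rightarrow> nat" where
  "N_scratch_comm n P = (LEAST k. \<exists>C. C \<subseteq> channels n \<and> card C = k \<and> simulates_from_scratch n C P)"

end

theory Submission
  imports Defs
begin


lemma closed_sub:
  assumes "S \<subseteq> T" "\<And>x y. x \<in> T \<Longrightarrow> (x,y) \<in> E \<Longrightarrow> y \<in> T"
  shows "E\<^sup>* `` S \<subseteq> T"
proof
  fix y assume "y \<in> E\<^sup>* `` S"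
  then obtain x where x: "x \<in> S" "(x,y) \<in> E\<^sup>*" by auto
  from x(2) show "y \<in> T"
    by (induction rule: rtrancl_induct) (use assms x(1) in auto)
qed

lemma comp_card:
  assumes "finite C"
  shows "finite S \<Longrightarrow> finite ((C \<union> C\<inverse>)\<^sup>* `` S) \<and> card ((C \<union> C\<inverse>)\<^sup>* `` S) \<le> card S + card C"
using assms proof (induction C arbitrary: S rule: finite_induct)
  case empty
  then show ?case by simp
next
  case (insert e C)
  obtain a b where e: "e = (a,b)" by (cases e)
  let ?E = "C \<union> C\<inverse>"
  let ?E' = "insert e C \<union> (insert e C)\<inverse>"
  have cardC: "card (insert e C) = card C + 1" using insert by simp
  have SE: "S \<subseteq> ?E\<^sup>* `` S" by auto
  show ?case
  proof (cases "a \<in> ?E\<^sup>*``S \<or> b \<in> ?E\<^sup>*``S")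
    case False
    have "?E'\<^sup>* `` S \<subseteq> ?E\<^sup>*``S"
    proof (rule closed_sub[OF SE])
      fix x y assume xy: "x \<in> ?E\<^sup>*``S" "(x,y) \<in> ?E'"
      show "y \<in> ?E\<^sup>*``S"
      proof (cases "(x,y) \<in> ?E")
        case True
        then show ?thesis using xy(1) by (meson Image_iff rtrancl.rtrancl_into_rtrancl)
      next
        case False
        then have "x = a \<or> x = b" using xy(2) e by auto
        then show ?thesis using xy(1) \<open>\<not> (a \<in> ?E\<^sup>*``S \<or> b \<in> ?E\<^sup>*``S)\<close> by auto
      qed
    qed
    moreover have "finite (?E\<^sup>*``S) \<and> card (?E\<^sup>*``S) \<le> card S + card C" using insert by blast
    ultimately have "finite (?E'\<^sup>*``S)" "card (?E'\<^sup>*``S) \<le> card (?E\<^sup>*``S)"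
      using finite_subset card_mono by blast+
    then show ?thesis using cardC \<open>finite (?E\<^sup>*``S) \<and> card (?E\<^sup>*``S) \<le> card S + card C\<close> by linarith
  next
    case True
    then obtain u w where uw: "u \<in> ?E\<^sup>*``S" "(u = a \<and> w = b) \<or> (u = b \<and> w = a)" by blast
    let ?T = "?E\<^sup>*``(insert w S)"
    have "?E'\<^sup>* `` S \<subseteq> ?T"
    proof (rule closed_sub)
      show "S \<subseteq> ?T" by auto
    next
      fix x y assume xy: "x \<in> ?T" "(x,y) \<in> ?E'"
      show "y \<in> ?T"
      proof (cases "(x,y) \<in> ?E")
        case True
        then show ?thesis using xy(1) by (meson Image_iff rtrancl.rtrancl_into_rtrancl)
      next
        case False
        then have "(x = a \<and> y = b) \<or> (x = b \<and> y = a)" using xy(2) e by auto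
        moreover have "u \<in> ?T" using uw(1) by (meson Image_mono subset_insertI subsetD order_refl)
        moreover have "w \<in> ?T" by auto
        ultimately show ?thesis using uw(2) by auto
      qed
    qed
    moreover have T: "finite ?T \<and> card ?T \<le> card (insert w S) + card C" using insert by simp
    moreover have "card (insert w S) \<le> card S + 1" using insert.prems by (simp add: card_insert_if)
    ultimately have "finite (?E'\<^sup>*``S)" "card (?E'\<^sup>*``S) \<le> card ?T"
      using finite_subset card_mono by blast+
    then show ?thesis using cardC T \<open>card (insert w S) \<le> card S + 1\<close> by linarith
  qed
qed

lemma det_exists:
  assumes "simulates_from_scratch n C (fc_box n f)"
  shows "\<exists>g. (\<forall>j<n. \<forall>x y. (\<forall>k. (k, j) \<in> C\<^sup>* \<longrightarrow> x k = y k) \<longrightarrow> g j x = g j y) \<and>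
             (\<forall>x. odd (card {j. j < n \<and> g j x}) = f x)"
proof -
  obtain \<mu> :: "(nat \<Rightarrow> (nat \<Rightarrow> bool) \<Rightarrow> bool) pmf" where
    dep: "\<forall>g\<in>set_pmf \<mu>. \<forall>j<n. \<forall>x y. (\<forall>k. (k, j) \<in> C\<^sup>* \<longrightarrow> x k = y k) \<longrightarrow> g j x = g j y" and
    pr: "\<forall>a x. measure_pmf.prob \<mu> {g. \<forall>j<n. g j x = a j} = fc_box n f a x"
    using assms unfolding simulates_from_scratch_def by blast
  obtain g where g: "g \<in> set_pmf \<mu>" using set_pmf_not_empty[of \<mu>] by blast
  have "odd (card {j. j < n \<and> g j x}) = f x" for x
  proof -
    have "measure_pmf.prob \<mu> {g'. \<forall>j<n. g' j x = g j x} > 0"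
      by (rule measure_pmf_posI[OF g]) simp
    moreover have "measure_pmf.prob \<mu> {g'. \<forall>j<n. g' j x = g j x} = fc_box n f (\<lambda>j. g j x) x"
      using spec[OF spec[OF pr, of "\<lambda>j. g j x"], of x] by simp
    ultimately have "fc_box n f (\<lambda>j. g j x) x > 0" by simp
    then show ?thesis unfolding fc_box_def by (simp split: if_splits)
  qed
  then have "\<forall>x. odd (card {j. j < n \<and> g j x}) = f x" by blast
  moreover have "\<forall>j<n. \<forall>x y. (\<forall>k. (k, j) \<in> C\<^sup>* \<longrightarrow> x k = y k) \<longrightarrow> g j x = g j y"
    using dep g by (rule bspec)
  ultimately show ?thesis by blast
qed

lemma count_identity:
  fixes n :: nat and c :: "nat set \<Rightarrow> bool"
  assumes M: "M \<subseteq> {0..<n}" "c M" "a \<in> M" "b \<in> M" "a \<noteq> b"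
    and minM: "\<And>S. S \<subseteq> {0..<n} \<Longrightarrow> c S \<Longrightarrow> a \<in> S \<Longrightarrow> b \<in> S \<Longrightarrow> card M \<le> card S"
  defines "Qs \<equiv> \<lambda>X. {I. I \<subseteq> {0..<n} \<and> c I \<and> I \<subseteq> X}"
  shows "card (Qs M) + card (Qs (M - {a,b})) = card (Qs (M - {b})) + card (Qs (M - {a})) + 1"
proof -
  have fin: "finite (Qs X)" for X unfolding Qs_def
    by (rule finite_subset[of _ "Pow {0..<n}"]) auto
  have eq1: "Qs M = (Qs (M - {b}) \<union> Qs (M - {a})) \<union> {M}"
  proof
    show "Qs M \<subseteq> (Qs (M - {b}) \<union> Qs (M - {a})) \<union> {M}"
    proof
      fix S assume S: "S \<in> Qs M"
      show "S \<in> (Qs (M - {b}) \<union> Qs (M - {a})) \<union> {M}"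
      proof (cases "a \<in> S \<and> b \<in> S")
        case True
        moreover have "S \<subseteq> {0..<n}" "c S" using S unfolding Qs_def by auto
        ultimately have "card M \<le> card S" using minM by simp
        moreover have "S \<subseteq> M" "finite M" using S M unfolding Qs_def by (auto intro: finite_subset)
        ultimately have "S = M" using card_seteq[of M S] by simp
        then show ?thesis by simp
      next
        case False
        then show ?thesis using S unfolding Qs_def by auto
      qed
    qed
  next
    show "(Qs (M - {b}) \<union> Qs (M - {a})) \<union> {M} \<subseteq> Qs M" using M unfolding Qs_def by auto
  qed
  have Mnot: "M \<notin> Qs (M - {b}) \<union> Qs (M - {a})" using M unfolding Qs_def by auto
  have eq2: "Qs (M - {b}) \<inter> Qs (M - {a}) = Qs (M - {a,b})" unfolding Qs_def by auto
  have c1: "card (Qs M) = card (Qs (M - {b}) \<union> Qs (M - {a})) + 1"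
    unfolding eq1 using Mnot fin by simp
  have c2: "card (Qs (M - {b})) + card (Qs (M - {a})) = card (Qs (M - {b}) \<union> Qs (M - {a})) + card (Qs (M - {a,b}))"
    using card_Un_Int[OF fin fin] eq2 by simp
  show ?thesis using c1 c2 by linarith
qed

lemma card_split_K:
  fixes n :: nat
  shows   "card {j. j < n \<and> P j} = card {j. j < n \<and> j \<in> K \<and> P j} + card {j. j < n \<and> j \<notin> K \<and> P j}"
proof -
  have "{j. j < n \<and> P j} = {j. j < n \<and> j \<in> K \<and> P j} \<union> {j. j < n \<and> j \<notin> K \<and> P j}" by auto
  moreover have "finite {j. j < n \<and> j \<in> K \<and> P j}" by (rule finite_subset[of _ "{..<n}"]) auto
  moreover have "finite {j. j < n \<and> j \<notin> K \<and> P j}" by (rule finite_subset[of _ "{..<n}"]) auto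
  ultimately show ?thesis by (simp add: card_Un_disjoint disjoint_iff)
qed

lemma parity_contra:
  fixes c1 c2 c3 c4 q1 q2 q3 q4 :: nat
  shows "even (c1+c2+c3+c4) \<Longrightarrow> q1+q2 = q3+q4+1 \<Longrightarrow> odd c1 = odd q1 \<Longrightarrow> odd c2 = odd q2 \<Longrightarrow> odd c3 = odd q3 \<Longrightarrow> odd c4 = odd q4 \<Longrightarrow> False"
proof -
  assume a: "even (c1+c2+c3+c4)" "q1+q2 = q3+q4+1" "odd c1 = odd q1" "odd c2 = odd q2" "odd c3 = odd q3" "odd c4 = odd q4"
  from a(2) have "even (q1+q2) = even (q3+q4+1)" by simp
  then show False using a(1,3-6) by simp argo
qed

lemma no_crossing:
  fixes n :: nat and c :: "nat set \<Rightarrow> bool" and g :: "nat \<Rightarrow> (nat \<Rightarrow> bool) \<Rightarrow> bool"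
  assumes dep: "\<forall>j<n. \<forall>x y. (\<forall>k. (k, j) \<in> C\<^sup>* \<longrightarrow> x k = y k) \<longrightarrow> g j x = g j y"
    and par: "\<forall>x. odd (card {j. j < n \<and> g j x}) = anf_eval n c x"
    and Kin: "\<forall>j<n. j \<in> K \<longrightarrow> (\<forall>k. (k, j) \<in> C\<^sup>* \<longrightarrow> k \<in> K)"
    and Kout: "\<forall>j<n. j \<notin> K \<longrightarrow> (\<forall>k. (k, j) \<in> C\<^sup>* \<longrightarrow> k \<notin> K)"
    and I: "I \<subseteq> {0..<n}" "c I" "a \<in> I" "a \<in> K" "b \<in> I" "b \<notin> K"
  shows False
proof -
  have ab: "a \<noteq> b" using I by auto
  let ?P = "\<lambda>S. S \<subseteq> {0..<n} \<and> c S \<and> a \<in> S \<and> b \<in> S"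
  obtain M where M: "?P M" and minM: "\<forall>S. ?P S \<longrightarrow> card M \<le> card S"
    using ex_has_least_nat[of ?P I card] I by blast
  define Qs where "Qs = (\<lambda>X. {I. I \<subseteq> {0..<n} \<and> c I \<and> I \<subseteq> X})"
  have ci: "card (Qs M) + card (Qs (M - {a,b})) = card (Qs (M - {b})) + card (Qs (M - {a})) + 1"
    unfolding Qs_def by (rule count_identity) (use M minM ab in auto)
  have N: "anf_eval n c (\<lambda>i. i \<in> X) = odd (card (Qs X))" for X
    unfolding anf_eval_def Qs_def by (simp add: subset_eq)
  define cnt where "cnt = (\<lambda>x. card {j. j < n \<and> g j x})"
  define pp where "pp = (\<lambda>x. card {j. j < n \<and> j \<in> K \<and> g j x})"
  define qq where "qq = (\<lambda>x. card {j. j < n \<and> j \<notin> K \<and> g j x})"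
  have cpq: "cnt x = pp x + qq x" for x unfolding cnt_def pp_def qq_def by (rule card_split_K)
  have inK: "g j (\<lambda>i. i \<in> X) = g j (\<lambda>i. i \<in> Y)"
    if "j < n" "j \<in> K" "\<And>k. k \<in> K \<Longrightarrow> (k \<in> X) = (k \<in> Y)" for j X Y
    by (rule dep[rule_format, OF \<open>j < n\<close>]) (use Kin that in blast)
  have outK: "g j (\<lambda>i. i \<in> X) = g j (\<lambda>i. i \<in> Y)"
    if "j < n" "j \<notin> K" "\<And>k. k \<notin> K \<Longrightarrow> (k \<in> X) = (k \<in> Y)" for j X Y
    by (rule dep[rule_format, OF \<open>j < n\<close>]) (use Kout that in blast)
  have p1: "pp (\<lambda>i. i \<in> M - {a}) = pp (\<lambda>i. i \<in> M - {a,b})"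
  proof -
    have "g j (\<lambda>i. i \<in> M - {a}) = g j (\<lambda>i. i \<in> M - {a,b})" if "j < n" "j \<in> K" for j
      by (rule inK[OF that]) (use I in auto)
    then show ?thesis unfolding pp_def by (metis (mono_tags, lifting))
  qed
  have p2: "pp (\<lambda>i. i \<in> M) = pp (\<lambda>i. i \<in> M - {b})"
  proof -
    have "g j (\<lambda>i. i \<in> M) = g j (\<lambda>i. i \<in> M - {b})" if "j < n" "j \<in> K" for j
      by (rule inK[OF that]) (use I in auto)
    then show ?thesis unfolding pp_def by (metis (mono_tags, lifting))
  qed
  have q1: "qq (\<lambda>i. i \<in> M - {b}) = qq (\<lambda>i. i \<in> M - {a,b})"
  proof -
    have "g j (\<lambda>i. i \<in> M - {b}) = g j (\<lambda>i. i \<in> M - {a,b})" if "j < n" "j \<notin> K" for j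
      by (rule outK[OF that]) (use I in auto)
    then show ?thesis unfolding qq_def by (metis (mono_tags, lifting))
  qed
  have q2: "qq (\<lambda>i. i \<in> M) = qq (\<lambda>i. i \<in> M - {a})"
  proof -
    have "g j (\<lambda>i. i \<in> M) = g j (\<lambda>i. i \<in> M - {a})" if "j < n" "j \<notin> K" for j
      by (rule outK[OF that]) (use I in auto)
    then show ?thesis unfolding qq_def by (metis (mono_tags, lifting))
  qed
  have e: "odd (cnt (\<lambda>i. i \<in> X)) = odd (card (Qs X))" for X
    using par N unfolding cnt_def by simp
  have s: "even (cnt (\<lambda>i. i \<in> M) + cnt (\<lambda>i. i \<in> M - {a,b}) + cnt (\<lambda>i. i \<in> M - {b}) + cnt (\<lambda>i. i \<in> M - {a}))"
    unfolding cpq p1 p2 q1 q2 by presburger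
  show False by (rule parity_contra[OF s ci e[of M] e[of "M - {a,b}"] e[of "M - {b}"] e[of "M - {a}"]])
qed

lemma nJ_ge2:
  assumes fin: "finite J" and ne: "J1 \<noteq> {}" "J2 \<noteq> {}" and un: "J1 \<union> J2 = J"
    and dis: "\<forall>A\<in>J1. \<forall>B\<in>J2. A \<inter> B = {}" and emp: "{} \<notin> J"
  shows "n_J J \<ge> 2"
proof -
  have J12: "J1 \<inter> J2 = {}"
  proof (rule ccontr)
    assume "J1 \<inter> J2 \<noteq> {}"
    then obtain A where A: "A \<in> J1" "A \<in> J2" by blast
    have "A \<inter> A = {}" using bspec[OF bspec[OF dis A(1)] A(2)] .
    then have "A \<inter> A = {}" by simp
    then have "A = {}" by simp
    then show False using emp un A by blast
  qed
  then have neq: "J1 \<noteq> J2" using ne by blast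
  have J21: "J2 \<inter> J1 = {}" using J12 by blast
  have dis': "\<forall>A\<in>J2. \<forall>B\<in>J1. A \<inter> B = {}" using dis by (auto simp: disjoint_iff)
  have dbp: "disjoint_block_partition J {J1, J2}"
    unfolding disjoint_block_partition_def
  proof (intro conjI)
    show "\<forall>B\<in>{J1, J2}. B \<noteq> {}" using ne by auto
    show "\<Union> {J1, J2} = J" using un by auto
    show "\<forall>B1\<in>{J1, J2}. \<forall>B2\<in>{J1, J2}. B1 \<noteq> B2 \<longrightarrow> B1 \<inter> B2 = {}" using J12 J21 by simp
    show "\<forall>B1\<in>{J1, J2}. \<forall>B2\<in>{J1, J2}. B1 \<noteq> B2 \<longrightarrow> (\<forall>A\<in>B1. \<forall>A'\<in>B2. A \<inter> A' = {})"
      using dis dis' by simp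
  qed
  have "{P. disjoint_block_partition J P} \<subseteq> Pow (Pow J)"
  proof
    fix P assume "P \<in> {P. disjoint_block_partition J P}"
    then have "\<Union>P = J" unfolding disjoint_block_partition_def by simp
    then show "P \<in> Pow (Pow J)" by auto
  qed
  moreover have "finite (Pow (Pow J))" using fin by simp
  ultimately have "finite {P. disjoint_block_partition J P}" by (rule finite_subset)
  then have f2: "finite (card ` {P. disjoint_block_partition J P})" by simp
  have "card {J1, J2} \<in> card ` {P. disjoint_block_partition J P}" using dbp by blast
  then have "card {J1, J2} \<le> n_J J" unfolding n_J_def using f2 by (rule Max_ge[rotated])
  then show ?thesis using neq by simp
qed

lemma finite_channels: "finite (channels n)"
  by (rule finite_subset[of _ "{0..<n} \<times> {0..<n}"]) (auto simp: channels_def)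

lemma conv_in_sym: "(k, j) \<in> C\<^sup>* \<Longrightarrow> (j, k) \<in> (C \<union> C\<inverse>)\<^sup>*"
proof -
  assume "(k, j) \<in> C\<^sup>*"
  then have "(j, k) \<in> (C\<inverse>)\<^sup>*" by (simp add: rtrancl_converseI)
  then show ?thesis using rtrancl_mono[of "C\<inverse>" "C \<union> C\<inverse>"] by blast
qed

lemma in_sym: "(k, j) \<in> C\<^sup>* \<Longrightarrow> (k, j) \<in> (C \<union> C\<inverse>)\<^sup>*"
  using rtrancl_mono[of "C" "C \<union> C\<inverse>"] by blast

lemma lower_bound:
  fixes n :: nat and c :: "nat set \<Rightarrow> bool"
  assumes sim: "simulates_from_scratch n C (fc_box n (anf_eval n c))"
    and Cch: "C \<subseteq> channels n" and nJ: "n_J (monomials_J n c) = 1"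
  shows "card (\<Union> (monomials_J n c)) \<le> card C + 1"
proof -
  obtain g where dep: "\<forall>j<n. \<forall>x y. (\<forall>k. (k, j) \<in> C\<^sup>* \<longrightarrow> x k = y k) \<longrightarrow> g j x = g j y"
    and par: "\<forall>x. odd (card {j. j < n \<and> g j x}) = anf_eval n c x"
    using det_exists[OF sim] by blast
  define J where "J = monomials_J n c"
  have finC: "finite C" using Cch finite_channels finite_subset by blast
  show ?thesis
  proof (cases "\<Union>J = {}")
    case True
    have "card (\<Union>J) = 0" using True by (simp only: card.empty)
    then show ?thesis unfolding J_def by simp
  next
    case False
    then obtain v I0 where I0: "I0 \<in> J" "v \<in> I0" by blast
    define K where "K = (C \<union> C\<inverse>)\<^sup>* `` {v}"
    have Kin: "\<forall>j<n. j \<in> K \<longrightarrow> (\<forall>k. (k, j) \<in> C\<^sup>* \<longrightarrow> k \<in> K)"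
    proof (intro allI impI)
      fix j k assume "j \<in> K" "(k, j) \<in> C\<^sup>*"
      then have "(v, j) \<in> (C \<union> C\<inverse>)\<^sup>*" "(j, k) \<in> (C \<union> C\<inverse>)\<^sup>*"
        using conv_in_sym unfolding K_def by auto
      then show "k \<in> K" unfolding K_def using rtrancl_trans by fastforce
    qed
    have Kout: "\<forall>j<n. j \<notin> K \<longrightarrow> (\<forall>k. (k, j) \<in> C\<^sup>* \<longrightarrow> k \<notin> K)"
    proof (intro allI impI notI)
      fix j k assume "j \<notin> K" "(k, j) \<in> C\<^sup>*" "k \<in> K"
      then have "(v, k) \<in> (C \<union> C\<inverse>)\<^sup>*" "(k, j) \<in> (C \<union> C\<inverse>)\<^sup>*"
        using in_sym unfolding K_def by auto
      then have "j \<in> K" unfolding K_def using rtrancl_trans by fastforce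
      then show False using \<open>j \<notin> K\<close> by simp
    qed
    have Jsub: "I \<subseteq> {0..<n}" "c I" "card I \<ge> 2" if "I \<in> J" for I
      using that unfolding J_def monomials_J_def by auto
    have split: "I \<subseteq> K \<or> I \<inter> K = {}" if "I \<in> J" for I
    proof (rule ccontr)
      assume "\<not> (I \<subseteq> K \<or> I \<inter> K = {})"
      then obtain a b where "a \<in> I" "a \<in> K" "b \<in> I" "b \<notin> K" by blast
      then show False by (rule no_crossing[OF dep par Kin Kout Jsub(1,2)[OF that]])
    qed
    have UK: "\<Union>J \<subseteq> K"
    proof (rule ccontr)
      assume "\<not> \<Union>J \<subseteq> K"
      then obtain u I1 where I1: "I1 \<in> J" "u \<in> I1" "u \<notin> K" by blast
      have vK: "v \<in> K" unfolding K_def by simp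
      have "n_J J \<ge> 2"
      proof (rule nJ_ge2[of J "{I\<in>J. I \<subseteq> K}" "{I\<in>J. I \<inter> K = {}}"])
        show "finite J"
          by (rule finite_subset[of _ "Pow {0..<n}"]) (auto dest: Jsub)
        show "{I\<in>J. I \<subseteq> K} \<noteq> {}" using I0 vK split by blast
        show "{I\<in>J. I \<inter> K = {}} \<noteq> {}" using I1 split by blast
        show "{I\<in>J. I \<subseteq> K} \<union> {I\<in>J. I \<inter> K = {}} = J" using split by blast
        show "\<forall>A\<in>{I\<in>J. I \<subseteq> K}. \<forall>B\<in>{I\<in>J. I \<inter> K = {}}. A \<inter> B = {}" by blast
        show "{} \<notin> J" using Jsub(3) by fastforce
      qed
      then show False using nJ unfolding J_def by simp
    qed
    have "finite K \<and> card K \<le> card {v} + card C"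
      unfolding K_def by (rule comp_card[OF finC]) simp
    then have "card (\<Union>J) \<le> card K" "card K \<le> 1 + card C" using UK card_mono by auto
    then show ?thesis unfolding J_def by simp
  qed
qed



lemma card_insert_cond:
  assumes "finite A" "x \<notin> A"
  shows "card {i \<in> insert x A. P i} = card {i\<in>A. P i} + (if P x then 1 else 0)"
proof (cases "P x")
  case True
  then have "{i \<in> insert x A. P i} = insert x {i\<in>A. P i}" by auto
  then show ?thesis using assms True by simp
next
  case False
  then have "{i \<in> insert x A. P i} = {i\<in>A. P i}" by auto
  then show ?thesis using False by simp
qed

lemma odd_card_xor:
  "finite A \<Longrightarrow> odd (card {i\<in>A. p i \<noteq> q i}) = (odd (card {i\<in>A. p i}) \<noteq> odd (card {i\<in>A. q i}))"
proof (induction A rule: finite_induct)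
  case empty then show ?case by simp
next
  case (insert x A)
  show ?case using insert.IH
    unfolding card_insert_cond[OF insert.hyps, of "\<lambda>i. p i \<noteq> q i"] card_insert_cond[OF insert.hyps, of p]
      card_insert_cond[OF insert.hyps, of q]
    by auto
qed

lemma anf_split:
  fixes n :: nat and c :: "nat set \<Rightarrow> bool"
  assumes UW: "\<Union>(monomials_J n c) \<subseteq> W"
  shows "anf_eval n c x = (odd (card {S. S \<subseteq> {0..<n} \<and> c S \<and> S \<subseteq> W \<and> (\<forall>i\<in>S. x i)})
            \<noteq> odd (card {j. j < n \<and> j \<notin> W \<and> c {j} \<and> x j}))"
proof -
  define A1 where "A1 = {S. S \<subseteq> {0..<n} \<and> c S \<and> S \<subseteq> W \<and> (\<forall>i\<in>S. x i)}"
  define L where "L = {j. j < n \<and> j \<notin> W \<and> c {j} \<and> x j}"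
  have eq: "{I. I \<subseteq> {0..<n} \<and> c I \<and> (\<forall>i\<in>I. x i)} = A1 \<union> (\<lambda>j. {j}) ` L"
  proof
    show "{I. I \<subseteq> {0..<n} \<and> c I \<and> (\<forall>i\<in>I. x i)} \<subseteq> A1 \<union> (\<lambda>j. {j}) ` L"
    proof
      fix S assume S: "S \<in> {I. I \<subseteq> {0..<n} \<and> c I \<and> (\<forall>i\<in>I. x i)}"
      have finS: "finite S" using S finite_subset by auto
      show "S \<in> A1 \<union> (\<lambda>j. {j}) ` L"
      proof (cases "S \<subseteq> W")
        case True then show ?thesis using S unfolding A1_def by auto
      next
        case False
        have "\<not> card S \<ge> 2"
        proof
          assume "card S \<ge> 2"
          then have "S \<in> monomials_J n c" using S unfolding monomials_J_def by auto
          then show False using UW False by blast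
        qed
        moreover have "card S \<noteq> 0" using False finS by auto
        ultimately have "card S = 1" by linarith
        then obtain j where j: "S = {j}" using card_1_singletonE by blast
        then show ?thesis using S False unfolding L_def by auto
      qed
    qed
  next
    show "A1 \<union> (\<lambda>j. {j}) ` L \<subseteq> {I. I \<subseteq> {0..<n} \<and> c I \<and> (\<forall>i\<in>I. x i)}"
      unfolding A1_def L_def by auto
  qed
  have fA1: "finite A1" unfolding A1_def
    by (rule finite_subset[of _ "Pow {0..<n}"]) auto
  have fL: "finite L" unfolding L_def by (rule finite_subset[of _ "{..<n}"]) auto
  have dj: "A1 \<inter> (\<lambda>j. {j}) ` L = {}" unfolding A1_def L_def by auto
  have "card (A1 \<union> (\<lambda>j. {j}) ` L) = card A1 + card L"
    using card_Un_disjoint[OF fA1 _ dj] fL by (simp add: card_image)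
  then show ?thesis unfolding anf_eval_def eq A1_def[symmetric] L_def[symmetric] by simp
qed

lemma upper_sim:
  fixes n r :: nat and c :: "nat set \<Rightarrow> bool" and W :: "nat set"
  assumes r: "r \<in> W" and W: "W \<subseteq> {0..<n}" and UW: "\<Union>(monomials_J n c) \<subseteq> W"
  shows "simulates_from_scratch n ((\<lambda>i. (i, r)) ` (W - {r})) (fc_box n (anf_eval n c))"
proof -
  define C where "C = (\<lambda>i. (i, r)) ` (W - {r})"
  have rn: "r < n" using r W by auto
  define ell where "ell = (\<lambda>j (x :: nat \<Rightarrow> bool). j \<notin> W \<and> c {j} \<and> x j)"
  define Fr where "Fr = (\<lambda>x :: nat \<Rightarrow> bool. odd (card {S. S \<subseteq> {0..<n} \<and> c S \<and> S \<subseteq> W \<and> (\<forall>i\<in>S. x i)}))"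
  define A where "A = {i. i < n \<and> i \<noteq> r}"
  have finA: "finite A" unfolding A_def by (rule finite_subset[of _ "{..<n}"]) auto
  define Z where "Z = {z :: nat \<Rightarrow> bool. \<forall>i. z i \<longrightarrow> i \<in> A}"
  define G where "G = (\<lambda>(z :: nat \<Rightarrow> bool) j x. if j = r then (Fr x \<noteq> odd (card {i\<in>A. z i})) else (z j \<noteq> ell j x))"
  have Zimg: "Z = (\<lambda>B i. i \<in> B) ` Pow A"
  proof
    show "Z \<subseteq> (\<lambda>B i. i \<in> B) ` Pow A"
    proof
      fix z assume "z \<in> Z"
      then have "{i. z i} \<in> Pow A" "z = (\<lambda>i. i \<in> {i. z i})" unfolding Z_def by auto
      then show "z \<in> (\<lambda>B i. i \<in> B) ` Pow A" by blast
    qed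
    show "(\<lambda>B i. i \<in> B) ` Pow A \<subseteq> Z" unfolding Z_def by auto
  qed
  have inj: "inj_on (\<lambda>B i. i \<in> B) (Pow A)"
    by (rule inj_onI) (metis Collect_mem_eq)
  have finZ: "finite Z" unfolding Zimg using finA by simp
  have neZ: "Z \<noteq> {}" unfolding Zimg by blast
  have cardA: "card A = n - 1"
  proof -
    have "A = {0..<n} - {r}" unfolding A_def by auto
    then show ?thesis using rn by simp
  qed
  have cardZ: "card Z = 2 ^ (n - 1)"
    unfolding Zimg card_image[OF inj] card_Pow[OF finA] cardA by simp
  define \<mu> where "\<mu> = map_pmf G (pmf_of_set Z)"
  have anf: "anf_eval n c x = (Fr x \<noteq> odd (card {j\<in>A. ell j x}))" for x
  proof -
    have "{j. j < n \<and> j \<notin> W \<and> c {j} \<and> x j} = {j\<in>A. ell j x}"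
      unfolding A_def ell_def using r by auto
    then show ?thesis using anf_split[OF UW, of x] unfolding Fr_def by simp
  qed
  have dep: "\<forall>g\<in>set_pmf \<mu>. \<forall>j<n. \<forall>x y. (\<forall>k. (k, j) \<in> C\<^sup>* \<longrightarrow> x k = y k) \<longrightarrow> g j x = g j y"
  proof (intro ballI allI impI)
    fix g j and x y :: "nat \<Rightarrow> bool" assume g: "g \<in> set_pmf \<mu>" and j: "j < n" and xy: "\<forall>k. (k, j) \<in> C\<^sup>* \<longrightarrow> x k = y k"
    obtain z where gz: "g = G z" using g unfolding \<mu>_def by (auto simp: finZ neZ)
    show "g j x = g j y"
    proof (cases "j = r")
      case True
      have "\<forall>k\<in>W. x k = y k"
      proof
        fix k assume k: "k \<in> W"
        show "x k = y k"
        proof (cases "k = r")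
          case True then show ?thesis using xy \<open>j = r\<close> by auto
        next
          case False
          then have "(k, r) \<in> C" unfolding C_def using k by auto
          then show ?thesis using xy \<open>j = r\<close> by auto
        qed
      qed
      then have "Fr x = Fr y" unfolding Fr_def
        by (intro arg_cong[where f="\<lambda>X. odd (card X)"] Collect_cong) blast
      then show ?thesis unfolding gz G_def using True by simp
    next
      case False
      have "x j = y j" using xy by auto
      then show ?thesis unfolding gz G_def ell_def using False by simp
    qed
  qed
  have prob: "measure_pmf.prob \<mu> {g. \<forall>j<n. g j x = a j} = fc_box n (anf_eval n c) a x" for a x
  proof -
    define z0 where "z0 = (\<lambda>i. i \<in> A \<and> (a i \<noteq> ell i x))"
    define cond where "cond = (odd (card {j. j < n \<and> a j}) = anf_eval n c x)"
    have z0Z: "z0 \<in> Z" unfolding Z_def z0_def by auto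
    have ca: "card {j. j < n \<and> a j} = card {j\<in>A. a j} + (if a r then 1 else 0)"
    proof -
      have "{j. j < n \<and> a j} = {j \<in> insert r A. a j}" unfolding A_def using rn by auto
      moreover have "r \<notin> A" unfolding A_def by simp
      ultimately show ?thesis using card_insert_cond[OF finA, of r a] by simp
    qed
    have cz0: "odd (card {i\<in>A. z0 i}) = (odd (card {i\<in>A. a i}) \<noteq> odd (card {i\<in>A. ell i x}))"
    proof -
      have "{i\<in>A. z0 i} = {i\<in>A. a i \<noteq> ell i x}" unfolding z0_def by auto
      then show ?thesis using odd_card_xor[OF finA, of a "\<lambda>i. ell i x"] by simp
    qed
    have set_eq: "Z \<inter> {z. \<forall>j<n. G z j x = a j} = (if cond then {z0} else {})"
    proof -
      have uniq: "z = z0" if "z \<in> Z" "\<forall>j<n. G z j x = a j" for z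
      proof
        fix i show "z i = z0 i"
        proof (cases "i \<in> A")
          case True
          then have "i < n" "i \<noteq> r" unfolding A_def by auto
          then have "(z i \<noteq> ell i x) = a i" using that(2) unfolding G_def by auto
          then show ?thesis unfolding z0_def using True by auto
        next
          case False
          then show ?thesis using that(1) unfolding Z_def z0_def by auto
        qed
      qed
      have z0ok: "(\<forall>j<n. G z0 j x = a j) = cond"
      proof -
        have other: "\<forall>j<n. j \<noteq> r \<longrightarrow> G z0 j x = a j"
          unfolding G_def z0_def A_def by auto
        have "(G z0 r x = a r) = cond"
          unfolding G_def cond_def ca anf using cz0 by auto
        show ?thesis
        proof
          assume "\<forall>j<n. G z0 j x = a j"
          then show cond using rn \<open>(G z0 r x = a r) = cond\<close> by simp
        next
          assume cond
          show "\<forall>j<n. G z0 j x = a j"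
          proof (intro allI impI)
            fix j assume "j < n"
            show "G z0 j x = a j"
            proof (cases "j = r")
              case True then show ?thesis using \<open>cond\<close> \<open>(G z0 r x = a r) = cond\<close> by simp
            next
              case False then show ?thesis using other \<open>j < n\<close> by simp
            qed
          qed
        qed
      qed
      show ?thesis
      proof (cases cond)
        case True
        have "Z \<inter> {z. \<forall>j<n. G z j x = a j} = {z0}"
        proof
          show "Z \<inter> {z. \<forall>j<n. G z j x = a j} \<subseteq> {z0}" using uniq by blast
          show "{z0} \<subseteq> Z \<inter> {z. \<forall>j<n. G z j x = a j}" using z0Z z0ok True by simp
        qed
        then show ?thesis using True by simp
      next
        case False
        have "Z \<inter> {z. \<forall>j<n. G z j x = a j} = {}"
        proof (rule equals0I)
          fix z assume "z \<in> Z \<inter> {z. \<forall>j<n. G z j x = a j}"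
          then have "z = z0" "\<forall>j<n. G z j x = a j" using uniq by auto
          then show False using z0ok False by simp
        qed
        then show ?thesis using False by simp
      qed
    qed
    have "measure_pmf.prob \<mu> {g. \<forall>j<n. g j x = a j} = measure_pmf.prob (pmf_of_set Z) {z. \<forall>j<n. G z j x = a j}"
      unfolding \<mu>_def by simp
    also have "\<dots> = card (Z \<inter> {z. \<forall>j<n. G z j x = a j}) / card Z"
      by (rule measure_pmf_of_set[OF neZ finZ])
    also have "\<dots> = fc_box n (anf_eval n c) a x"
      unfolding set_eq cardZ fc_box_def cond_def[symmetric] by simp
    finally show ?thesis .
  qed
  show ?thesis unfolding simulates_from_scratch_def C_def[symmetric]
    by (rule exI[of _ \<mu>], rule conjI[OF dep], intro allI, rule prob)
qed


lemma upper_exists: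
  fixes n :: nat and c :: "nat set \<Rightarrow> bool"
  assumes n: "n \<ge> 2"
  shows "\<exists>C. C \<subseteq> channels n \<and> card C = card (\<Union> (monomials_J n c)) - 1 \<and>
             simulates_from_scratch n C (fc_box n (anf_eval n c))"
proof -
  define U where "U = \<Union> (monomials_J n c)"
  have Un: "U \<subseteq> {0..<n}" unfolding U_def monomials_J_def by auto
  have finU: "finite U" using Un finite_subset by blast
  obtain W r where r: "r \<in> W" and W: "W \<subseteq> {0..<n}" and UW: "U \<subseteq> W" and cW: "card W - 1 = card U - 1"
    and finW: "finite W"
  proof (cases "U = {}")
    case True
    show ?thesis by (rule that[of 0 "{0}"]) (use n True in auto)
  next
    case False
    then obtain r where "r \<in> U" by blast
    show ?thesis by (rule that[of r U]) (use \<open>r \<in> U\<close> Un finU in auto)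
  qed
  define C where "C = (\<lambda>i. (i, r)) ` (W - {r})"
  have "C \<subseteq> channels n" unfolding C_def channels_def using W r by auto
  moreover have "card C = card U - 1"
  proof -
    have "inj_on (\<lambda>i. (i, r)) (W - {r})" by (auto simp: inj_on_def)
    then have "card C = card (W - {r})" unfolding C_def by (rule card_image)
    also have "\<dots> = card W - 1" using r finW by simp
    finally show ?thesis using cW by simp
  qed
  moreover have "simulates_from_scratch n C (fc_box n (anf_eval n c))"
    unfolding C_def by (rule upper_sim[OF r W]) (use UW in \<open>simp add: U_def\<close>)
  ultimately show ?thesis unfolding U_def by blast
qed

theorem theorem2:
  fixes n :: nat and c :: "nat set \<Rightarrow> bool"
  assumes "n \<ge> 2"
    and "n_J (monomials_J n c) = 1"
  shows "N_scratch_comm n (fc_box n (anf_eval n c)) = card (\<Union> (monomials_J n c)) - 1"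
  unfolding N_scratch_comm_def
proof (rule Least_equality)
  show "\<exists>C. C \<subseteq> channels n \<and> card C = card (\<Union> (monomials_J n c)) - 1 \<and>
             simulates_from_scratch n C (fc_box n (anf_eval n c))"
    by (rule upper_exists[OF assms(1)])
next
  fix k assume "\<exists>C. C \<subseteq> channels n \<and> card C = k \<and> simulates_from_scratch n C (fc_box n (anf_eval n c))"
  then obtain C where C: "C \<subseteq> channels n" "card C = k" "simulates_from_scratch n C (fc_box n (anf_eval n c))"
    by blast
  have "card (\<Union> (monomials_J n c)) \<le> card C + 1" by (rule lower_bound[OF C(3) C(1) assms(2)])
  then show "card (\<Union> (monomials_J n c)) - 1 \<le> k" using C(2) by linarith
qed

end
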